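(* Let $A$ be a general metric space, $\mathcal F$ a weakly flat filter on $A$ and $M$ a left module on $A$ such that $M^-(\mathcal F)(x)<M(x)$ for some $x\in A$. Then there is a forward Cauchy sequence $(y_n)$ in $A$ such that $(y_n)\to\mathcal F$ and $M^-((y_n))(x)<M(x)$ for some $x\in A$ (where $M^-((y_n))$ is $M^-$ of the filter of the sequence).
   Context: A general metric space $A$ is a set with $A(-,-):A\times A\to[0,\infty]$, $A(x,x)=0$, $A(x,z)\le A(x,y)+A(y,z)$. A left module is $M:A\to[0,\infty]$ with $M(x)\le M(y)+A(x,y)$. A filter on $A$ is a nonempty set of nonempty subsets closed under finite intersections and supersets; $M^-(\mathcal F)(x)=\sup_{f\in\mathcal F}\inf_{y\in f}A(x,y)$. $\mathcal F$ is weakly flat iff for every $\epsilon>0$ there is $f\in\mathcal F$ such that for all $x\in f$ and all $g\in\mathcal F$ there is $y\in g$ with $A(x,y)\le\epsilon$. For weakly flat filters, $\mathcal F_1\to\mathcal F_2$ iff for every $\epsilon>0$ there is $f\in\mathcal F_1$ such that for every $x\in f$ and every $g\in\mathcal F_2$ there is $y\in g$ with $A(x,y)\le\epsilon$. The filter of a sequence $(y_n)$ is generated by the tails $\{y_p:p\ge n\}$; $(y_n)$ is forward Cauchy iff for every $\epsilon>0$ there is $N$ with $A(y_n,y_m)\le\epsilon$ whenever $m\ge n\ge N$. *)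

theory Defs
  imports Main "HOL-Library.Extended_Nonnegative_Real"
begin

definition gen_metric :: "('a \<Rightarrow> 'a \<Rightarrow> ennreal) \<Rightarrow> bool" where
  "gen_metric d \<longleftrightarrow> (\<forall>x. d x x = 0) \<and> (\<forall>x y z. d x z \<le> d x y + d y z)"

definition left_module :: "('a \<Rightarrow> 'a \<Rightarrow> ennreal) \<Rightarrow> ('a \<Rightarrow> ennreal) \<Rightarrow> bool" where
  "left_module d M \<longleftrightarrow> (\<forall>x y. M x \<le> M y + d x y)"

definition fsets :: "'a filter \<Rightarrow> 'a set set" where
  "fsets F = {f. eventually (\<lambda>y. y \<in> f) F}"

definition Mminus :: "('a \<Rightarrow> 'a \<Rightarrow> ennreal) \<Rightarrow> 'a filter \<Rightarrow> 'a \<Rightarrow> ennreal" where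
  "Mminus d F x = (SUP f \<in> fsets F. INF y \<in> f. d x y)"

definition weakly_flat :: "('a \<Rightarrow> 'a \<Rightarrow> ennreal) \<Rightarrow> 'a filter \<Rightarrow> bool" where
  "weakly_flat d F \<longleftrightarrow> (\<forall>\<epsilon>::real. \<epsilon> > 0 \<longrightarrow>
     (\<exists>f \<in> fsets F. \<forall>x \<in> f. \<forall>g \<in> fsets F. \<exists>y \<in> g. d x y \<le> ennreal \<epsilon>))"

definition filter_conv :: "('a \<Rightarrow> 'a \<Rightarrow> ennreal) \<Rightarrow> 'a filter \<Rightarrow> 'a filter \<Rightarrow> bool" where
  "filter_conv d F1 F2 \<longleftrightarrow> (\<forall>\<epsilon>::real. \<epsilon> > 0 \<longrightarrow>
     (\<exists>f \<in> fsets F1. \<forall>x \<in> f. \<forall>g \<in> fsets F2. \<exists>y \<in> g. d x y \<le> ennreal \<epsilon>))"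

definition seq_filter :: "(nat \<Rightarrow> 'a) \<Rightarrow> 'a filter" where
  "seq_filter y = filtermap y sequentially"

definition forward_cauchy :: "('a \<Rightarrow> 'a \<Rightarrow> ennreal) \<Rightarrow> (nat \<Rightarrow> 'a) \<Rightarrow> bool" where
  "forward_cauchy d y \<longleftrightarrow> (\<forall>\<epsilon>::real. \<epsilon> > 0 \<longrightarrow>
     (\<exists>N. \<forall>n m. N \<le> n \<longrightarrow> n \<le> m \<longrightarrow> d (y n) (y m) \<le> ennreal \<epsilon>))"

end

theory Submission
  imports Defs
begin

lemma pow2_small:
  fixes \<delta> \<epsilon> :: real
  assumes "\<delta> > 0" "\<epsilon> > 0"
  shows "\<exists>N. \<delta> / 2^N \<le> \<epsilon>"
proof -
  obtain N where "\<delta>/\<epsilon> < (2::real)^N" using real_arch_pow[of 2 "\<delta>/\<epsilon>"] by auto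
  then have "\<delta> < \<epsilon> * 2^N" using assms by (simp add: field_simps)
  then have "\<delta> / 2^N \<le> \<epsilon>" by (simp add: field_simps)
  then show ?thesis by blast
qed

theorem mainTheorem13:
  fixes d :: "'a \<Rightarrow> 'a \<Rightarrow> ennreal" and M :: "'a \<Rightarrow> ennreal" and F :: "'a filter"
  assumes "gen_metric d"
    and "F \<noteq> bot"
    and "weakly_flat d F"
    and "left_module d M"
    and "\<exists>x. Mminus d F x < M x"
  shows "\<exists>y :: nat \<Rightarrow> 'a. forward_cauchy d y \<and> filter_conv d (seq_filter y) F
           \<and> (\<exists>x. Mminus d (seq_filter y) x < M x)"
proof -
  have tri: "\<And>x y z. d x z \<le> d x y + d y z" using assms(1) unfolding gen_metric_def by blast
  obtain x0 where x0: "Mminus d F x0 < M x0" using assms(5) by blast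
  obtain u where u: "Mminus d F x0 < u" "u < M x0" using dense[OF x0] by blast
  obtain v where v: "u < v" "v < M x0" using dense[OF u(2)] by blast
  obtain a where a: "u = ennreal a" "a \<ge> 0"
  proof (cases u rule: ennreal_cases)
    case (real r) then show ?thesis using that by blast
  next
    case top then show ?thesis using v(1) by simp
  qed
  obtain b where b: "v = ennreal b" "b \<ge> 0"
  proof (cases v rule: ennreal_cases)
    case (real r) then show ?thesis using that by blast
  next
    case top then show ?thesis using v(2) by simp
  qed
  have ab: "a < b" using u v a b by (simp add: ennreal_less_iff)
  define \<delta> where "\<delta> = b - a"
  have \<delta>: "\<delta> > 0" using ab \<delta>_def by simp
  define e where "e n = \<delta> / 2^(Suc n)" for n :: nat
  have epos: "e n > 0" for n using \<delta> e_def by simp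
  have "\<forall>n. \<exists>f. f \<in> fsets F \<and> (\<forall>x\<in>f. \<forall>g\<in>fsets F. \<exists>z\<in>g. d x z \<le> ennreal (e n))"
    using assms(3) epos unfolding weakly_flat_def by blast
  then obtain ff where ff: "\<And>n. ff n \<in> fsets F"
    "\<And>n x g. x \<in> ff n \<Longrightarrow> g \<in> fsets F \<Longrightarrow> \<exists>z\<in>g. d x z \<le> ennreal (e n)"
    by metis
  define fd where "fd n = (\<Inter>k\<le>n. ff k)" for n
  have fdF: "fd n \<in> fsets F" for n
  proof -
    have "\<forall>k\<in>{..n}. eventually (\<lambda>y. y \<in> ff k) F" using ff(1) unfolding fsets_def by auto
    then have "eventually (\<lambda>y. \<forall>k\<in>{..n}. y \<in> ff k) F"
      using eventually_ball_finite[of "{..n}"] by auto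
    then show ?thesis unfolding fsets_def fd_def by auto
  qed
  have fdmono: "m \<le> n \<Longrightarrow> fd n \<subseteq> fd m" for m n unfolding fd_def by auto
  have fdff: "fd n \<subseteq> ff n" for n unfolding fd_def by auto
  have "(INF z\<in>fd 0. d x0 z) \<le> Mminus d F x0"
    unfolding Mminus_def using fdF by (intro SUP_upper) auto
  then have "(INF z\<in>fd 0. d x0 z) < ennreal a" using u a by simp
  then obtain y0 where y0: "y0 \<in> fd 0" "d x0 y0 < ennreal a"
    by (meson INF_less_iff)
  define y where "y = rec_nat y0 (\<lambda>n yn. SOME z. z \<in> fd (Suc n) \<and> d yn z \<le> ennreal (e n))"
  have y0eq: "y 0 = y0" unfolding y_def by simp
  have ySuc: "y (Suc n) = (SOME z. z \<in> fd (Suc n) \<and> d (y n) z \<le> ennreal (e n))" for n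
    unfolding y_def by simp
  have yin: "y n \<in> fd n \<and> (y (Suc n) \<in> fd (Suc n) \<and> d (y n) (y (Suc n)) \<le> ennreal (e n))" for n
  proof (induction n)
    case 0
    have ex: "\<exists>z. z \<in> fd (Suc 0) \<and> d (y 0) z \<le> ennreal (e 0)"
      using ff(2)[of "y 0" 0 "fd (Suc 0)"] fdF fdff y0 y0eq by blast
    show ?case using someI_ex[OF ex] ySuc[of 0] y0 y0eq by simp
  next
    case (Suc n)
    have ex: "\<exists>z. z \<in> fd (Suc (Suc n)) \<and> d (y (Suc n)) z \<le> ennreal (e (Suc n))"
      using ff(2)[of "y (Suc n)" "Suc n" "fd (Suc (Suc n))"] fdF fdff Suc by blast
    show ?case using someI_ex[OF ex] ySuc[of "Suc n"] Suc by simp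
  qed
  have dist: "d (y n) (y (n + k)) \<le> ennreal (\<delta> / 2^n - \<delta> / 2^(n+k))" for n k
  proof (induction k)
    case 0
    then show ?case using assms(1) unfolding gen_metric_def by simp
  next
    case (Suc k)
    have "d (y n) (y (n + Suc k)) \<le> d (y n) (y (n + k)) + d (y (n+k)) (y (Suc (n+k)))"
      using tri by simp
    also have "\<dots> \<le> ennreal (\<delta> / 2^n - \<delta> / 2^(n+k)) + ennreal (e (n+k))"
      using Suc yin[of "n+k"] by (intro add_mono) auto
    also have "\<dots> = ennreal (\<delta> / 2^n - \<delta> / 2^(n+k) + e (n+k))"
    proof -
      have "\<delta> / 2^(n+k) \<le> \<delta> / 2^n" using \<delta> by (simp add: frac_le power_increasing)
      then show ?thesis using epos[of "n+k"] by (simp add: ennreal_plus)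
    qed
    also have "\<delta> / 2^n - \<delta> / 2^(n+k) + e (n+k) = \<delta> / 2^n - \<delta> / 2^(n + Suc k)"
      unfolding e_def by (simp add: field_simps)
    finally show ?case .
  qed
  have distle: "n \<le> m \<Longrightarrow> d (y n) (y m) \<le> ennreal (\<delta> / 2^n)" for n m
  proof -
    assume "n \<le> m"
    then obtain k where "m = n + k" using le_Suc_ex by blast
    then have "d (y n) (y m) \<le> ennreal (\<delta> / 2^n - \<delta> / 2^(n+k))" using dist by simp
    also have "\<dots> \<le> ennreal (\<delta> / 2^n)" using \<delta> by (intro ennreal_leI) simp
    finally show ?thesis .
  qed
  have cauchy: "forward_cauchy d y"
    unfolding forward_cauchy_def
  proof (intro allI impI)
    fix \<epsilon> :: real assume "\<epsilon> > 0"
    then obtain N where N: "\<delta> / 2^N \<le> \<epsilon>" using pow2_small \<delta> by blast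
    have "d (y n) (y m) \<le> ennreal \<epsilon>" if "N \<le> n" "n \<le> m" for n m
    proof -
      have "\<delta> / 2^n \<le> \<delta> / 2^N" using \<delta> that by (simp add: frac_le power_increasing)
      then show ?thesis using distle[OF that(2)] N
        by (meson ennreal_leI order.trans)
    qed
    then show "\<exists>N. \<forall>n m. N \<le> n \<longrightarrow> n \<le> m \<longrightarrow> d (y n) (y m) \<le> ennreal \<epsilon>" by blast
  qed
  have conv: "filter_conv d (seq_filter y) F"
    unfolding filter_conv_def
  proof (intro allI impI)
    fix \<epsilon> :: real assume "\<epsilon> > 0"
    then obtain N where N: "\<delta> / 2^N \<le> \<epsilon>" using pow2_small \<delta> by blast
    have eN: "e N \<le> \<epsilon>" using N \<delta> unfolding e_def by (simp add: field_simps)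
    define f where "f = y ` {N..}"
    have "f \<in> fsets (seq_filter y)"
      unfolding fsets_def seq_filter_def f_def eventually_filtermap eventually_sequentially by auto
    moreover have "\<forall>x\<in>f. \<forall>g\<in>fsets F. \<exists>z\<in>g. d x z \<le> ennreal \<epsilon>"
    proof (intro ballI)
      fix x g assume x: "x \<in> f" and g: "g \<in> fsets F"
      then obtain p where p: "p \<ge> N" "x = y p" unfolding f_def by auto
      have "x \<in> ff N" using yin[of p] fdmono[OF p(1)] fdff[of N] p by auto
      then obtain z where "z \<in> g" "d x z \<le> ennreal (e N)" using ff(2) g by blast
      then show "\<exists>z\<in>g. d x z \<le> ennreal \<epsilon>" using eN by (meson ennreal_leI order.trans)
    qed
    ultimately show "\<exists>f\<in>fsets (seq_filter y). \<forall>x\<in>f. \<forall>g\<in>fsets F. \<exists>z\<in>g. d x z \<le> ennreal \<epsilon>"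
      by blast
  qed
  have "Mminus d (seq_filter y) x0 \<le> ennreal b"
    unfolding Mminus_def
  proof (rule SUP_least)
    fix f assume "f \<in> fsets (seq_filter y)"
    then obtain N where "\<forall>n\<ge>N. y n \<in> f"
      unfolding fsets_def seq_filter_def eventually_filtermap eventually_sequentially by auto
    then have yN: "y N \<in> f" by simp
    have "(INF z\<in>f. d x0 z) \<le> d x0 (y N)" using yN by (rule INF_lower)
    also have "\<dots> \<le> d x0 y0 + d y0 (y N)" using tri by blast
    also have "\<dots> \<le> ennreal a + ennreal \<delta>"
      using y0 distle[of 0 N] y0eq by (intro add_mono) auto
    also have "\<dots> = ennreal b" using a \<delta> \<delta>_def by (simp add: ennreal_plus[symmetric])
    finally show "(INF z\<in>f. d x0 z) \<le> ennreal b" .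
  qed
  then have "Mminus d (seq_filter y) x0 < M x0" using v b by simp
  then show ?thesis using cauchy conv by blast
qed

end
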